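(* Let $\tau:\mathcal{D}_{\mathbf{V}_L}\to\mathcal{D}_{\mathbf{V}_H}$ be a constructive abstraction function w.r.t. clusterings $\mathbb{C}$ and $\mathbb{D}$. If $\mathbf{X}_L$ is a union of clusters in $\mathbb{C}$ (i.e., $\mathbf{X}_L=\bigcup_{\mathbf{C}_i\in\mathbb{C}'}\mathbf{C}_i$ for some $\mathbb{C}'\subseteq\mathbb{C}$), then for every $\mathbf{x}_L\in\mathcal{D}_{\mathbf{X}_L}$, $\omega_\tau(\mathbf{X}_L\leftarrow\mathbf{x}_L)$ exists and equals $\tau(\mathbf{X}_L)\leftarrow\tau(\mathbf{x}_L)$.
   Context: $\mathcal{D}_{\mathbf{X}}$ denotes the (Cartesian product) domain of a set of variables $\mathbf{X}$. An intervariable clustering of $\mathbf{V}_L$ is a set $\mathbb{C}=\{\mathbf{C}_1,\dots,\mathbf{C}_n\}$ forming a partition of a subset of $\mathbf{V}_L$; an intravariable clustering is $\mathbb{D}=\{\mathbb{D}_{\mathbf{C}_i}\}$ where $\mathbb{D}_{\mathbf{C}_i}=\{\mathcal{D}^1_{\mathbf{C}_i},\dots,\mathcal{D}^{m_i}_{\mathbf{C}_i}\}$ is a partition of $\mathcal{D}_{\mathbf{C}_i}$. A constructive abstraction function w.r.t. $\mathbb{C},\mathbb{D}$: $\mathbf{V}_H=\{V_{H,1},\dots,V_{H,n}\}$ in bijection with $\mathbb{C}$, $\mathcal{D}_{V_{H,i}}=\{v^1_{H,i},\dots,v^{m_i}_{H,i}\}$ in bijection with $\mathbb{D}_{\mathbf{C}_i}$,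 and $\tau(\mathbf{v}_L)=(\tau_{\mathbf{C}_i}(\mathbf{c}_i):\mathbf{C}_i\in\mathbb{C})$ with $\tau_{\mathbf{C}_i}(\mathbf{c}_i)=v^j_{H,i}$ iff $\mathbf{c}_i\in\mathcal{D}^j_{\mathbf{C}_i}$; for a union of clusters $\mathbf{W}_L$, $\tau(\mathbf{w}_L)=(\tau_{\mathbf{C}_i}(\mathbf{c}_i):\mathbf{C}_i\subseteq\mathbf{W}_L)$ and $\tau(\mathbf{W}_L)=\{V_{H,i}:\mathbf{C}_i\subseteq\mathbf{W}_L\}$. For a set of variables $\mathbf{V}$ and a value $\mathbf{x}$ of $\mathbf{X}\subseteq\mathbf{V}$, $\mathrm{Rst}(\mathbf{V},\mathbf{x})=\{\mathbf{v}\in\mathcal{D}_{\mathbf{V}}:\mathbf{v}\text{ is consistent with }\mathbf{x}\}$; for a set $\mathbf{T}\subseteq\mathcal{D}_{\mathbf{V}_L}$, $\tau(\mathbf{T})=\{\tau(\mathbf{v}):\mathbf{v}\in\mathbf{T}\}$. The map $\omega_\tau$ is defined by $\omega_\tau(\mathbf{X}_L\leftarrow\mathbf{x}_L)=(\mathbf{X}_H\leftarrow\mathbf{x}_H)$ whenever $\tau(\mathrm{Rst}(\mathbf{V}_L,\mathbf{x}_L))=\mathrm{Rst}(\mathbf{V}_H,\mathbf{x}_H)$ (it exists when such an intervention $\mathbf{X}_H\leftarrow\mathbf{x}_H$ exists). *)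

theory Defs
  imports Main "HOL-Library.FuncSet" "HOL-Library.Disjoint_Sets"
begin

text \<open>A value of a set of variables X is an extensional function in PiE X D
  (undefined outside X).\<close>

definition Rst :: "('v \<Rightarrow> 'a set) \<Rightarrow> 'v set \<Rightarrow> ('v \<Rightarrow> 'a) \<Rightarrow> 'v set \<Rightarrow> ('v \<Rightarrow> 'a) set" where
  "Rst D V x X = {v \<in> PiE V D. \<forall>u\<in>X. v u = x u}"

definition constructive_abstraction ::
  "('v \<Rightarrow> 'a set) \<Rightarrow> 'v set \<Rightarrow> 'v set set \<Rightarrow> ('v set \<Rightarrow> ('v \<Rightarrow> 'a) set set)
   \<Rightarrow> ('h \<Rightarrow> 'b set) \<Rightarrow> 'h set \<Rightarrow> ('v set \<Rightarrow> 'h) \<Rightarrow> ('v set \<Rightarrow> ('v \<Rightarrow> 'a) set \<Rightarrow> 'b) \<Rightarrow> bool" where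
  "constructive_abstraction D VL Cs Dp DH VH hv hval \<longleftrightarrow>
     \<Union>Cs \<subseteq> VL \<and> partition_on (\<Union>Cs) Cs \<and>
     (\<forall>C\<in>Cs. partition_on (PiE C D) (Dp C)) \<and>
     bij_betw hv Cs VH \<and>
     (\<forall>C\<in>Cs. bij_betw (hval C) (Dp C) (DH (hv C)))"

definition tau_vars :: "'v set set \<Rightarrow> ('v set \<Rightarrow> 'h) \<Rightarrow> 'v set \<Rightarrow> 'h set" where
  "tau_vars Cs hv W = hv ` {C \<in> Cs. C \<subseteq> W}"

definition tau_asg ::
  "'v set set \<Rightarrow> ('v set \<Rightarrow> ('v \<Rightarrow> 'a) set set) \<Rightarrow> ('v set \<Rightarrow> 'h) \<Rightarrow> ('v set \<Rightarrow> ('v \<Rightarrow> 'a) set \<Rightarrow> 'b)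
   \<Rightarrow> 'v set \<Rightarrow> ('v \<Rightarrow> 'a) \<Rightarrow> ('h \<Rightarrow> 'b)" where
  "tau_asg Cs Dp hv hval W w =
     (\<lambda>h. if h \<in> tau_vars Cs hv W
          then (let C = the_inv_into Cs hv h in hval C (THE B. B \<in> Dp C \<and> restrict w C \<in> B))
          else undefined)"

definition omega_tau ::
  "('v \<Rightarrow> 'a set) \<Rightarrow> 'v set \<Rightarrow> 'v set set \<Rightarrow> ('v set \<Rightarrow> ('v \<Rightarrow> 'a) set set)
   \<Rightarrow> ('h \<Rightarrow> 'b set) \<Rightarrow> 'h set \<Rightarrow> ('v set \<Rightarrow> 'h) \<Rightarrow> ('v set \<Rightarrow> ('v \<Rightarrow> 'a) set \<Rightarrow> 'b)
   \<Rightarrow> 'v set \<Rightarrow> ('v \<Rightarrow> 'a) \<Rightarrow> 'h set \<Rightarrow> ('h \<Rightarrow> 'b) \<Rightarrow> bool" where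
  "omega_tau D VL Cs Dp DH VH hv hval XL xL XH xH \<longleftrightarrow>
     XH \<subseteq> VH \<and> xH \<in> PiE XH DH \<and>
     tau_asg Cs Dp hv hval VL ` Rst D VL xL XL = Rst DH VH xH XH"

end

theory Submission
  imports Defs
begin

lemma part_unique:
  assumes "partition_on A P" "B \<in> P" "x \<in> B"
  shows "(THE B. B \<in> P \<and> x \<in> B) = B"
proof (rule the_equality)
  show "B \<in> P \<and> x \<in> B" using assms by blast
next
  fix B' assume "B' \<in> P \<and> x \<in> B'"
  then show "B' = B" using assms partition_onD2[OF assms(1)]
    by (meson disjointD disjoint_iff)
qed

lemma part_ex:
  assumes "partition_on A P" "x \<in> A"
  shows "\<exists>B\<in>P. x \<in> B"
  using assms partition_onD1 by blast

lemma tau_asg_val: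
  assumes "inj_on hv Cs" "C \<in> Cs" "C \<subseteq> W"
  shows "tau_asg Cs Dp hv hval W w (hv C) = hval C (THE B. B \<in> Dp C \<and> restrict w C \<in> B)"
  using assms by (auto simp: tau_asg_def tau_vars_def the_inv_into_f_f)

lemma tau_asg_out:
  assumes "h \<notin> tau_vars Cs hv W"
  shows "tau_asg Cs Dp hv hval W w h = undefined"
  using assms by (auto simp: tau_asg_def)

theorem lemma3:
  fixes D :: "'v \<Rightarrow> 'a set" and VL :: "'v set" and Cs :: "'v set set"
    and Dp :: "'v set \<Rightarrow> ('v \<Rightarrow> 'a) set set"
    and DH :: "'h \<Rightarrow> 'b set" and VH :: "'h set" and hv :: "'v set \<Rightarrow> 'h"
    and hval :: "'v set \<Rightarrow> ('v \<Rightarrow> 'a) set \<Rightarrow> 'b"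
  assumes "constructive_abstraction D VL Cs Dp DH VH hv hval"
    and "\<forall>u\<in>VL. D u \<noteq> {}"
    and "Cs' \<subseteq> Cs" and "XL = \<Union>Cs'"
    and "xL \<in> PiE XL D"
  shows "omega_tau D VL Cs Dp DH VH hv hval XL xL
           (tau_vars Cs hv XL) (tau_asg Cs Dp hv hval XL xL)"
proof -
  note ca = assms(1)[unfolded constructive_abstraction_def]
  have sub: "\<Union>Cs \<subseteq> VL" and pC: "partition_on (\<Union>Cs) Cs"
    and pD: "\<And>C. C \<in> Cs \<Longrightarrow> partition_on (PiE C D) (Dp C)"
    and bij: "bij_betw hv Cs VH"
    and bv: "\<And>C. C \<in> Cs \<Longrightarrow> bij_betw (hval C) (Dp C) (DH (hv C))"
    using ca by auto
  have inj: "inj_on hv Cs" using bij by (rule bij_betw_imp_inj_on)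
  have img: "hv ` Cs = VH" using bij by (rule bij_betw_imp_surj_on)
  have disj: "disjoint Cs" using pC partition_onD2 by blast
  have XLsub: "XL \<subseteq> VL" using assms(3,4) sub by blast
  have meet: "C \<subseteq> XL" if "C \<in> Cs" "u \<in> C" "u \<in> XL" for C u
  proof -
    from that assms(4) obtain C' where "C' \<in> Cs'" "u \<in> C'" by blast
    then have "C' = C" using disj that assms(3) unfolding disjoint_def by blast
    then show ?thesis using \<open>C' \<in> Cs'\<close> assms(4) by blast
  qed
  have VLall: "tau_vars Cs hv VL = VH" using sub img by (auto simp: tau_vars_def)
  have tauval: "tau_asg Cs Dp hv hval VL v (hv C) = hval C (THE B. B \<in> Dp C \<and> restrict v C \<in> B)"
    if "C \<in> Cs" for v C
    using tau_asg_val[OF inj that] that sub by blast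
  have classin: "(THE B. B \<in> Dp C \<and> f \<in> B) \<in> Dp C \<and> f \<in> (THE B. B \<in> Dp C \<and> f \<in> B)"
    if hC: "C \<in> Cs" "f \<in> PiE C D" for C f
  proof -
    obtain B where "B \<in> Dp C" "f \<in> B" using part_ex[OF pD[OF hC(1)] hC(2)] by blast
    then show ?thesis using part_unique[OF pD[OF hC(1)]] by simp
  qed
  have restr: "restrict v C \<in> PiE C D" if "v \<in> PiE V D" "C \<subseteq> V" for v V C
    using that by (auto simp: PiE_def Pi_def)
  let ?XH = "tau_vars Cs hv XL" and ?xH = "tau_asg Cs Dp hv hval XL xL"
  have XHsub: "?XH \<subseteq> VH" using img by (auto simp: tau_vars_def)
  have xHval: "?xH (hv C) = hval C (THE B. B \<in> Dp C \<and> restrict xL C \<in> B)"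
    if "C \<in> Cs" "C \<subseteq> XL" for C
    using tau_asg_val[OF inj that] .
  have xHin: "?xH \<in> PiE ?XH DH"
  proof (rule PiE_I)
    fix h assume "h \<in> ?XH"
    then obtain C where C: "C \<in> Cs" "C \<subseteq> XL" "h = hv C" by (auto simp: tau_vars_def)
    have "restrict xL C \<in> PiE C D" using restr[OF assms(5) C(2)] .
    then have "(THE B. B \<in> Dp C \<and> restrict xL C \<in> B) \<in> Dp C" using classin C(1) by blast
    then show "?xH h \<in> DH h" using C xHval bv[OF C(1)] bij_betwE by fastforce
  next
    fix h assume "h \<notin> ?XH" then show "?xH h = undefined" by (rule tau_asg_out)
  qed
  have eq: "tau_asg Cs Dp hv hval VL ` Rst D VL xL XL = Rst DH VH ?xH ?XH"
  proof
    show "tau_asg Cs Dp hv hval VL ` Rst D VL xL XL \<subseteq> Rst DH VH ?xH ?XH"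
    proof
      fix w assume "w \<in> tau_asg Cs Dp hv hval VL ` Rst D VL xL XL"
      then obtain v where v: "v \<in> PiE VL D" "\<forall>u\<in>XL. v u = xL u"
        and w: "w = tau_asg Cs Dp hv hval VL v" by (auto simp: Rst_def)
      have "w \<in> PiE VH DH"
      proof (rule PiE_I)
        fix h assume "h \<in> VH"
        then obtain C where C: "C \<in> Cs" "h = hv C" using img by blast
        have "restrict v C \<in> PiE C D" using restr[OF v(1)] C sub by blast
        then have "(THE B. B \<in> Dp C \<and> restrict v C \<in> B) \<in> Dp C" using classin C(1) by blast
        then show "w h \<in> DH h" using C w tauval bv[OF C(1)] bij_betwE by fastforce
      next
        fix h assume "h \<notin> VH" then show "w h = undefined" using w VLall tau_asg_out by metis
      qed
      moreover have "\<forall>h\<in>?XH. w h = ?xH h"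
      proof
        fix h assume "h \<in> ?XH"
        then obtain C where C: "C \<in> Cs" "C \<subseteq> XL" "h = hv C" by (auto simp: tau_vars_def)
        have "restrict v C = restrict xL C" using v(2) C(2) by (force simp: restrict_def)
        then show "w h = ?xH h" using C w tauval xHval by simp
      qed
      ultimately show "w \<in> Rst DH VH ?xH ?XH" by (simp add: Rst_def)
    qed
  next
    show "Rst DH VH ?xH ?XH \<subseteq> tau_asg Cs Dp hv hval VL ` Rst D VL xL XL"
    proof
      fix w assume "w \<in> Rst DH VH ?xH ?XH"
      then have w: "w \<in> PiE VH DH" "\<forall>h\<in>?XH. w h = ?xH h" by (auto simp: Rst_def)
      have "\<forall>C\<in>Cs. \<exists>f. f \<in> PiE C D \<and> hval C (THE B. B \<in> Dp C \<and> f \<in> B) = w (hv C)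
                 \<and> (C \<subseteq> XL \<longrightarrow> f = restrict xL C)"
      proof
        fix C assume C: "C \<in> Cs"
        show "\<exists>f. f \<in> PiE C D \<and> hval C (THE B. B \<in> Dp C \<and> f \<in> B) = w (hv C)
                 \<and> (C \<subseteq> XL \<longrightarrow> f = restrict xL C)"
        proof (cases "C \<subseteq> XL")
          case True
          have "hv C \<in> ?XH" using C True by (auto simp: tau_vars_def)
          then have "w (hv C) = ?xH (hv C)" using w(2) by blast
          then show ?thesis using True C xHval restr[OF assms(5) True] by auto
        next
          case False
          have "hv C \<in> VH" using C img by blast
          then have "w (hv C) \<in> DH (hv C)" using w(1) by blast
          then obtain B where B: "B \<in> Dp C" "hval C B = w (hv C)"
            using bv[OF C] by (metis bij_betw_def imageE)
          have "B \<noteq> {}" using B(1) partition_onD3[OF pD[OF C]] by blast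
          then obtain f where f: "f \<in> B" by blast
          have "B \<subseteq> PiE C D" using B(1) partition_onD1[OF pD[OF C]] by blast
          then have "f \<in> PiE C D" using f by blast
          moreover have "(THE B. B \<in> Dp C \<and> f \<in> B) = B" using part_unique[OF pD[OF C] B(1) f] .
          ultimately show ?thesis using B False by auto
        qed
      qed
      then obtain F where F: "\<And>C. C \<in> Cs \<Longrightarrow> F C \<in> PiE C D \<and>
          hval C (THE B. B \<in> Dp C \<and> F C \<in> B) = w (hv C) \<and> (C \<subseteq> XL \<longrightarrow> F C = restrict xL C)"
        by (drule_tac bchoice) (elim exE, blast)
      define cl where "cl u = (THE C. C \<in> Cs \<and> u \<in> C)" for u
      have cl: "cl u = C" if "C \<in> Cs" "u \<in> C" for u C
        unfolding cl_def using part_unique[OF pC that] .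
      define v where "v u = (if u \<in> \<Union>Cs then F (cl u) u else if u \<in> VL then (SOME a. a \<in> D u) else undefined)" for u
      have resv: "restrict v C = F C" if C: "C \<in> Cs" for C
      proof
        fix u show "restrict v C u = F C u"
        proof (cases "u \<in> C")
          case True then show ?thesis using cl[OF C True] C by (auto simp: v_def)
        next
          case False then show ?thesis using F[OF C] by (auto simp: PiE_def extensional_def)
        qed
      qed
      have vin: "v \<in> PiE VL D"
      proof (rule PiE_I)
        fix u assume u: "u \<in> VL"
        show "v u \<in> D u"
        proof (cases "u \<in> \<Union>Cs")
          case True
          then obtain C where C: "C \<in> Cs" "u \<in> C" by blast
          then show ?thesis using cl[OF C] F[OF C(1)] by (auto simp: v_def)
        next
          case False then show ?thesis using u assms(2) by (auto simp: v_def some_in_eq)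
        qed
      next
        fix u assume "u \<notin> VL" then show "v u = undefined" using sub by (auto simp: v_def)
      qed
      have vx: "\<forall>u\<in>XL. v u = xL u"
      proof
        fix u assume u: "u \<in> XL"
        then obtain C where C: "C \<in> Cs" "u \<in> C" using assms(3,4) by blast
        have "C \<subseteq> XL" using meet[OF C u] .
        then have "F C = restrict xL C" using F[OF C(1)] by blast
        then show "v u = xL u" using cl[OF C] C by (auto simp: v_def)
      qed
      have "tau_asg Cs Dp hv hval VL v = w"
      proof
        fix h show "tau_asg Cs Dp hv hval VL v h = w h"
        proof (cases "h \<in> VH")
          case True
          then obtain C where C: "C \<in> Cs" "h = hv C" using img by blast
          then show ?thesis using tauval[OF C(1)] resv[OF C(1)] F[OF C(1)] by simp
        next
          case False
          then show ?thesis using w(1) VLall tau_asg_out by (metis PiE_E)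
        qed
      qed
      moreover have "v \<in> Rst D VL xL XL" using vin vx by (simp add: Rst_def)
      ultimately show "w \<in> tau_asg Cs Dp hv hval VL ` Rst D VL xL XL" by blast
    qed
  qed
  show ?thesis unfolding omega_tau_def using XHsub xHin eq by blast
qed

end
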